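(* Let $L>1$ be a constant and $\mathcal S$ a set of relations. Then $|\Join_{S\in\mathcal S}S| = O(\mathrm{IN}^{\mathsf{DBP}(\mathcal S,L)})$.
   Context: A join query consists of a finite set $\mathcal S$ of relations; each $S$ is a finite set of tuples over attribute set $\mathsf{attr}(S)$; $\mathcal A=\bigcup_S\mathsf{attr}(S)$; the join $\Join_{S\in\mathcal S}S$ is the set of tuples $t$ over $\mathcal A$ with $\pi_{\mathsf{attr}(S)}(t)\in S$ for all $S$. $\mathrm{IN}=\sum_S|S|\ge2$, $\log=\log_{\mathrm{IN}}$. For $A\subseteq\mathsf{attr}(S)$, $v\in\pi_A(S)$: $\mathsf{deg}(v,S,A)=|\{t\in S:\pi_A(t)=v\}|$; $d_{S,A}=\max_{v\in\pi_A(S)}\mathsf{deg}(v,S,A)$ for $A\ne\emptyset$, $d_{S,\emptyset}=|S|$. DBP: a cover is a set $C$ of pairs $(S,A)$ with $S\in\mathcal S$, $A\subseteq\mathsf{attr}(S)$, $\bigcup_{(S,A)\in C}A=\mathcal A$. For a cover $C$, $O_{C,L}$ is the optimal value of: minimize $\sum_{a\in\mathcal A}v_a$ over real $v_a\ge0$ subject to $\sum_{a\in A'}v_a\ge\log\big(d_{\pi_A(S),A\setminus A'}/L\big)$ for all $(S,A)\in C$, $A'\subseteq A$. $\mathsf{DBP}(\mathcal S,L)=\min_C O_{C,L}$. $O(\cdot)$ hides factors depending only on the query schema and on $L$. *)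

theory Defs
  imports Main "HOL-Library.Log_Nat" Complex_Main
begin

text \<open>Tuples over an attribute set A are partial maps with domain A.\<close>

type_synonym ('a,'v) tuple = "'a \<rightharpoonup> 'v"

definition all_attrs :: "'r set \<Rightarrow> ('r \<Rightarrow> 'a set) \<Rightarrow> 'a set" where
  "all_attrs Rels attr = (\<Union>r\<in>Rels. attr r)"

definition is_instance :: "'r set \<Rightarrow> ('r \<Rightarrow> 'a set) \<Rightarrow> ('r \<Rightarrow> ('a,'v) tuple set) \<Rightarrow> bool" where
  "is_instance Rels attr R \<longleftrightarrow>
     (\<forall>r\<in>Rels. finite (R r) \<and> (\<forall>t\<in>R r. dom t = attr r))"

definition IN :: "'r set \<Rightarrow> ('r \<Rightarrow> ('a,'v) tuple set) \<Rightarrow> nat" where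
  "IN Rels R = (\<Sum>r\<in>Rels. card (R r))"

definition join :: "'r set \<Rightarrow> ('r \<Rightarrow> 'a set) \<Rightarrow> ('r \<Rightarrow> ('a,'v) tuple set) \<Rightarrow> ('a,'v) tuple set" where
  "join Rels attr R = {t. dom t = all_attrs Rels attr \<and> (\<forall>r\<in>Rels. t |` attr r \<in> R r)}"

definition proj :: "'a set \<Rightarrow> ('a,'v) tuple set \<Rightarrow> ('a,'v) tuple set" where
  "proj A S = (\<lambda>t. t |` A) ` S"

definition deg :: "('a,'v) tuple \<Rightarrow> ('a,'v) tuple set \<Rightarrow> 'a set \<Rightarrow> nat" where
  "deg v S A = card {t\<in>S. t |` A = v}"

text \<open>Maximum degree d_{S,A}; d_{S,{}} = |S|.  For empty S (no values) it is 0.\<close>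
definition maxdeg :: "('a,'v) tuple set \<Rightarrow> 'a set \<Rightarrow> nat" where
  "maxdeg S A = (if A = {} then card S else Max (insert 0 ((\<lambda>v. deg v S A) ` proj A S)))"

definition is_cover :: "'r set \<Rightarrow> ('r \<Rightarrow> 'a set) \<Rightarrow> ('r \<times> 'a set) set \<Rightarrow> bool" where
  "is_cover Rels attr C \<longleftrightarrow>
     (\<forall>(r,A)\<in>C. r \<in> Rels \<and> A \<subseteq> attr r) \<and> (\<Union>(r,A)\<in>C. A) = all_attrs Rels attr"

text \<open>Optimal value O_{C,L} of the linear program (as infimum of feasible objective values;
  the LP is feasible and bounded below by 0).\<close>
definition O_val :: "'r set \<Rightarrow> ('r \<Rightarrow> 'a set) \<Rightarrow> ('r \<Rightarrow> ('a,'v) tuple set)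
    \<Rightarrow> ('r \<times> 'a set) set \<Rightarrow> real \<Rightarrow> real" where
  "O_val Rels attr R C L = Inf {(\<Sum>a\<in>all_attrs Rels attr. x a) | x :: 'a \<Rightarrow> real.
      (\<forall>a\<in>all_attrs Rels attr. x a \<ge> 0) \<and>
      (\<forall>(r,A)\<in>C. \<forall>A'. A' \<subseteq> A \<longrightarrow>
          (\<Sum>a\<in>A'. x a) \<ge> log (real (IN Rels R)) (real (maxdeg (proj A (R r)) (A - A')) / L))}"

definition DBP :: "'r set \<Rightarrow> ('r \<Rightarrow> 'a set) \<Rightarrow> ('r \<Rightarrow> ('a,'v) tuple set) \<Rightarrow> real \<Rightarrow> real" where
  "DBP Rels attr R L = Min {O_val Rels attr R C L | C. is_cover Rels attr C}"

end

theory Submission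
  imports Defs
begin

lemma fiber_step:
  fixes J :: "('a,'v) tuple set" and T :: "('a,'v) tuple set"
  assumes finT: "finite T" and JT: "\<forall>t\<in>J. t |` A \<in> T"
    and degD: "\<And>v. card {\<tau>\<in>T. \<tau> |` (A \<inter> U) = v} \<le> D"
  shows "card ((\<lambda>t. t |` (A \<union> U)) ` J) \<le> card ((\<lambda>t. t |` U) ` J) * D"
proof -
  define P' where "P' = (\<lambda>t. t |` (A \<union> U)) ` J"
  define P where "P = (\<lambda>t. t |` U) ` J"
  have PP': "P = (\<lambda>s. s |` U) ` P'"
    unfolding P_def P'_def image_image by (simp add: Int_absorb1)
  show ?thesis
  proof (cases "finite P")
    case False
    then have "\<not> finite P'" using PP' by auto
    then show ?thesis unfolding P'_def[symmetric] by simp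
  next
    case True
    define F where "F p = {s\<in>P'. s |` U = p}" for p
    have "P' \<subseteq> (\<Union>p\<in>P. F p)" unfolding F_def PP' by auto
    have cF: "finite (F p) \<and> card (F p) \<le> D" if "p \<in> P" for p
    proof -
      have inj: "inj_on (\<lambda>s. s |` A) (F p)"
      proof (rule inj_onI)
        fix s1 s2 assume s1: "s1 \<in> F p" and s2: "s2 \<in> F p" and eq: "s1 |` A = s2 |` A"
        obtain t1 where t1: "t1 \<in> J" "s1 = t1 |` (A \<union> U)" using s1 unfolding F_def P'_def by auto
        obtain t2 where t2: "t2 \<in> J" "s2 = t2 |` (A \<union> U)" using s2 unfolding F_def P'_def by auto
        have eqU: "s1 |` U = s2 |` U" using s1 s2 unfolding F_def by auto
        show "s1 = s2"
        proof (rule ext)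
          fix y
          show "s1 y = s2 y"
          proof (cases "y \<in> A")
            case True then show ?thesis using fun_cong[OF eq, of y] by simp
          next
            case nA: False
            show ?thesis
            proof (cases "y \<in> U")
              case True then show ?thesis using fun_cong[OF eqU, of y] by simp
            next
              case False then show ?thesis using nA t1 t2 by simp
            qed
          qed
        qed
      qed
      have sub: "(\<lambda>s. s |` A) ` F p \<subseteq> {\<tau>\<in>T. \<tau> |` (A \<inter> U) = p |` (A \<inter> U)}"
      proof
        fix \<tau> assume "\<tau> \<in> (\<lambda>s. s |` A) ` F p"
        then obtain s t where st: "t \<in> J" "s = t |` (A \<union> U)" "s |` U = p" "\<tau> = s |` A"
          unfolding F_def P'_def by auto
        have "\<tau> = t |` A" using st by (simp add: Int_absorb1)
        moreover have "p = t |` ((A \<union> U) \<inter> U)" using st by simp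
        then have "p |` (A \<inter> U) = t |` (((A \<union> U) \<inter> U) \<inter> (A \<inter> U))" by simp
        moreover have "((A \<union> U) \<inter> U) \<inter> (A \<inter> U) = A \<inter> U" by blast
        ultimately show "\<tau> \<in> {\<tau>\<in>T. \<tau> |` (A \<inter> U) = p |` (A \<inter> U)}"
          using JT st(1) by (simp add: Int_ac)
      qed
      have "finite ((\<lambda>s. s |` A) ` F p)" by (rule finite_subset[OF sub]) (simp add: finT)
      then have finF: "finite (F p)" using inj finite_imageD by blast
      have "card (F p) = card ((\<lambda>s. s |` A) ` F p)" using inj by (simp add: card_image)
      also have "\<dots> \<le> card {\<tau>\<in>T. \<tau> |` (A \<inter> U) = p |` (A \<inter> U)}"
        by (rule card_mono[OF _ sub]) (simp add: finT)
      also have "\<dots> \<le> D" by (rule degD)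
      finally show ?thesis using finF by simp
    qed
    have "card P' \<le> card (\<Union>p\<in>P. F p)"
      by (rule card_mono) (use True cF \<open>P' \<subseteq> _\<close> in auto)
    also have "\<dots> \<le> (\<Sum>p\<in>P. card (F p))" by (rule card_UN_le[OF True])
    also have "\<dots> \<le> (\<Sum>p\<in>P. D)" by (rule sum_mono) (use cF in auto)
    also have "\<dots> = card P * D" by simp
    finally show ?thesis unfolding P_def P'_def .
  qed
qed
lemma card_le_maxdeg:
  assumes "finite T"
  shows "card {\<tau>\<in>T. \<tau> |` D = v} \<le> maxdeg T D"
proof (cases "D = {}")
  case True
  then show ?thesis unfolding maxdeg_def using assms by (simp add: card_mono)
next
  case False
  show ?thesis
  proof (cases "{\<tau>\<in>T. \<tau> |` D = v} = {}")
    case e: True show ?thesis unfolding e by simp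
  next
    case ne: False
    then have "v \<in> proj D T" unfolding proj_def by auto
    then have "deg v T D \<in> insert 0 ((\<lambda>v. deg v T D) ` proj D T)" by simp
    moreover have "finite (insert 0 ((\<lambda>v. deg v T D) ` proj D T))"
      using assms unfolding proj_def by simp
    ultimately have "deg v T D \<le> Max (insert 0 ((\<lambda>v. deg v T D) ` proj D T))" by (simp add: Max_ge)
    then show ?thesis using False unfolding maxdeg_def deg_def by simp
  qed
qed

lemma log_bound:
  fixes b L s :: real
  assumes "b > 1" "L > 0" "log b (real d / L) \<le> s"
  shows "real d \<le> L * b powr s"
proof (cases "d = 0")
  case True then show ?thesis using assms by simp
next
  case False
  then have "real d / L > 0" using assms by simp
  then have "real d / L \<le> b powr s" using assms log_le_iff by blast
  then show ?thesis using assms by (simp add: field_simps)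
qed

lemma core:
  fixes R :: "'r \<Rightarrow> ('a,'v) tuple set" and x :: "'a \<Rightarrow> real"
  assumes inst: "is_instance Rels attr R" and IN1: "real (IN Rels R) > 1" and L: "L > 1"
    and finattr: "\<forall>r\<in>Rels. finite (attr r)"
    and fin: "finite C"
  shows "(\<forall>(r,A)\<in>C. r \<in> Rels \<and> A \<subseteq> attr r) \<longrightarrow>
    (\<forall>(r,A)\<in>C. \<forall>A'. A' \<subseteq> A \<longrightarrow> (\<Sum>a\<in>A'. x a) \<ge> log (real (IN Rels R)) (real (maxdeg (proj A (R r)) (A - A')) / L)) \<longrightarrow>
    real (card ((\<lambda>t. t |` \<Union>(snd ` C)) ` join Rels attr R)) \<le> L ^ card C * real (IN Rels R) powr (\<Sum>a\<in>\<Union>(snd ` C). x a)"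
  using fin
proof (induction C rule: finite_induct)
  case empty
  have "(\<lambda>t. t |` {}) ` join Rels attr R \<subseteq> {Map.empty}" by auto
  then have "card ((\<lambda>t. t |` {}) ` join Rels attr R) \<le> card {Map.empty :: ('a,'v) tuple}"
    by (intro card_mono) auto
  then have "card ((\<lambda>t. t |` {}) ` join Rels attr R) \<le> 1" by simp
  then show ?case using IN1 by simp
next
  case (insert p C)
  obtain r A where p: "p = (r, A)" by fastforce
  show ?case
  proof (intro impI)
    assume sub: "\<forall>(r,A)\<in>insert p C. r \<in> Rels \<and> A \<subseteq> attr r"
      and feas: "\<forall>(r,A)\<in>insert p C. \<forall>A'. A' \<subseteq> A \<longrightarrow> (\<Sum>a\<in>A'. x a) \<ge> log (real (IN Rels R)) (real (maxdeg (proj A (R r)) (A - A')) / L)"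
    define U where "U = \<Union>(snd ` C)"
    define J where "J = join Rels attr R"
    define T where "T = proj A (R r)"
    define b where "b = real (IN Rels R)"
    have rR: "r \<in> Rels" "A \<subseteq> attr r" using sub p by auto
    have finT: "finite T" using inst rR unfolding T_def is_instance_def proj_def by auto
    have finA: "finite A" using rR finattr finite_subset by blast
    have "\<forall>X\<in>snd ` C. finite X"
    proof
      fix X assume "X \<in> snd ` C"
      then obtain r' where "(r', X) \<in> C" by auto
      then have "r' \<in> Rels" "X \<subseteq> attr r'" using sub by auto
      then show "finite X" using finattr finite_subset by blast
    qed
    then have finU: "finite U" unfolding U_def using insert(1) by auto
    have IH: "real (card ((\<lambda>t. t |` U) ` J)) \<le> L ^ card C * b powr (\<Sum>a\<in>U. x a)"
    proof -
      have subC: "\<forall>(r,A)\<in>C. r \<in> Rels \<and> A \<subseteq> attr r" using sub by blast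
      have feasC: "\<forall>(r,A)\<in>C. \<forall>A'. A' \<subseteq> A \<longrightarrow> (\<Sum>a\<in>A'. x a) \<ge> log (real (IN Rels R)) (real (maxdeg (proj A (R r)) (A - A')) / L)"
        using feas by blast
      show ?thesis using insert(3) subC feasC unfolding U_def J_def b_def by blast
    qed
    have JT: "\<forall>t\<in>J. t |` A \<in> T"
    proof
      fix t assume "t \<in> J"
      then have "t |` attr r \<in> R r" using rR unfolding J_def join_def by auto
      moreover have "t |` attr r |` A = t |` A" using rR by (simp add: Int_absorb1)
      ultimately show "t |` A \<in> T" unfolding T_def proj_def by (metis image_eqI)
    qed
    have step: "card ((\<lambda>t. t |` (A \<union> U)) ` J) \<le> card ((\<lambda>t. t |` U) ` J) * maxdeg T (A \<inter> U)"
      by (rule fiber_step[OF finT JT card_le_maxdeg[OF finT]])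
    have "log b (real (maxdeg T (A - (A - U))) / L) \<le> (\<Sum>a\<in>A - U. x a)"
      using feas p unfolding T_def b_def by auto
    moreover have "A - (A - U) = A \<inter> U" by blast
    ultimately have md: "real (maxdeg T (A \<inter> U)) \<le> L * b powr (\<Sum>a\<in>A - U. x a)"
      using log_bound[of b L] IN1 L unfolding b_def by auto
    have "real (card ((\<lambda>t. t |` (A \<union> U)) ` J)) \<le> real (card ((\<lambda>t. t |` U) ` J)) * real (maxdeg T (A \<inter> U))"
      using step by (metis of_nat_le_iff of_nat_mult)
    also have "\<dots> \<le> (L ^ card C * b powr (\<Sum>a\<in>U. x a)) * (L * b powr (\<Sum>a\<in>A - U. x a))"
      by (rule mult_mono[OF IH md]) (use L in auto)
    also have "\<dots> = L ^ card (insert p C) * b powr (\<Sum>a\<in>A \<union> U. x a)"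
    proof -
      have e: "A \<union> U = U \<union> (A - U)" by blast
      have "(\<Sum>a\<in>U \<union> (A - U). x a) = (\<Sum>a\<in>U. x a) + (\<Sum>a\<in>A - U. x a)"
        by (rule sum.union_disjoint) (use finA finU in auto)
      then have "(\<Sum>a\<in>A \<union> U. x a) = (\<Sum>a\<in>U. x a) + (\<Sum>a\<in>A - U. x a)" by (simp only: e)
      then show ?thesis using insert(1,2) IN1 unfolding b_def by (simp add: powr_add)
    qed
    finally show "real (card ((\<lambda>t. t |` \<Union>(snd ` insert p C)) ` join Rels attr R)) \<le> L ^ card (insert p C) * real (IN Rels R) powr (\<Sum>a\<in>\<Union>(snd ` insert p C). x a)"
      using p unfolding U_def J_def b_def by simp
  qed
qed
lemma maxdeg_le_card:
  assumes "finite T"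
  shows "maxdeg T D \<le> card T"
proof -
  have "deg v T D \<le> card T" for v unfolding deg_def using assms by (intro card_mono) auto
  then show ?thesis unfolding maxdeg_def using assms by (auto simp: proj_def)
qed

lemma maxdeg_proj_self:
  assumes "finite S"
  shows "maxdeg (proj A S) A \<le> 1"
proof (cases "A = {}")
  case True
  have "proj A S \<subseteq> {Map.empty}" using True unfolding proj_def by auto
  then have "card (proj A S) \<le> card {Map.empty :: ('a,'b) tuple}" by (intro card_mono) auto
  then show ?thesis using True unfolding maxdeg_def by simp
next
  case False
  have "deg v (proj A S) A \<le> 1" for v
  proof -
    have "{t \<in> proj A S. t |` A = v} \<subseteq> {v}" unfolding proj_def by auto
    then have "card {t \<in> proj A S. t |` A = v} \<le> card {v}" by (intro card_mono) auto
    then show ?thesis unfolding deg_def by simp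
  qed
  then show ?thesis unfolding maxdeg_def using assms False by (auto simp: proj_def)
qed

lemma log_le_from:
  fixes b L s :: real
  assumes "b > 1" "L > 0" "s \<ge> 0" "real d / L \<le> b powr s"
  shows "log b (real d / L) \<le> s"
proof (cases "d = 0")
  case True then show ?thesis using assms by (simp add: log_def)
next
  case False
  then have "real d / L > 0" using assms by simp
  then show ?thesis using assms log_le_iff by blast
qed

lemma feasible_one:
  fixes R :: "'r \<Rightarrow> ('a,'v) tuple set"
  assumes inst: "is_instance Rels attr R" and IN1: "real (IN Rels R) > 1" and L: "L > 1"
    and finattr: "\<forall>r\<in>Rels. finite (attr r)" and finR: "finite Rels"
    and rA: "r \<in> Rels" "A \<subseteq> attr r" and A'A: "A' \<subseteq> A"
  shows "log (real (IN Rels R)) (real (maxdeg (proj A (R r)) (A - A')) / L) \<le> (\<Sum>a\<in>A'. (1::real))"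
proof -
  define b where "b = real (IN Rels R)"
  define d where "d = maxdeg (proj A (R r)) (A - A')"
  have finRr: "finite (R r)" using inst rA unfolding is_instance_def by auto
  have "finite (attr r)" using rA finattr by blast
  then have finA': "finite A'" using A'A rA(2) by (meson finite_subset subset_trans)
  have "d \<le> card (proj A (R r))" unfolding d_def by (rule maxdeg_le_card) (simp add: proj_def finRr)
  also have "\<dots> \<le> card (R r)" unfolding proj_def by (rule card_image_le[OF finRr])
  also have "\<dots> \<le> IN Rels R" unfolding IN_def by (rule member_le_sum[OF rA(1) _ finR]) simp
  finally have dIN: "real d \<le> b" unfolding b_def by simp
  show ?thesis
  proof (cases "A' = {}")
    case True
    have "d \<le> 1" unfolding d_def using True maxdeg_proj_self[OF finRr] by simp
    then have "real d / L \<le> b powr 0" using L IN1 unfolding b_def by (simp add: field_simps)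
    then show ?thesis using True log_le_from[of b L 0 d] L IN1 unfolding b_def d_def by simp
  next
    case False
    then have c1: "card A' \<ge> 1" using finA' by (simp add: Suc_leI card_gt_0_iff)
    have "real d / L \<le> real d" using L by (simp add: divide_le_eq mult_le_cancel_left1)
    also have "\<dots> \<le> b" by fact
    also have "b = b powr 1" using IN1 unfolding b_def by simp
    also have "\<dots> \<le> b powr real (card A')" using c1 IN1 unfolding b_def by (intro powr_mono) auto
    finally show ?thesis using log_le_from[of b L "real (card A')" d] L IN1 unfolding b_def d_def by simp
  qed
qed

lemma restrict_dom: "m |` dom m = m"
  by (rule ext) (simp add: restrict_map_def domIff)

theorem proposition5p1:
  fixes Rels :: "'r set" and attr :: "'r \<Rightarrow> 'a set" and L :: real
  assumes "finite Rels" and "\<forall>r\<in>Rels. finite (attr r)" and "L > 1"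
  shows "\<exists>c::real. \<forall>R :: 'r \<Rightarrow> ('a,'v) tuple set.
           is_instance Rels attr R \<and> IN Rels R \<ge> 2 \<longrightarrow>
           real (card (join Rels attr R)) \<le> c * real (IN Rels R) powr DBP Rels attr R L"
proof -
  define Sig where "Sig = (SIGMA r:Rels. Pow (attr r))"
  have finSig: "finite Sig" unfolding Sig_def using assms(1,2) by auto
  define K where "K = L ^ card Sig"
  have covsub: "is_cover Rels attr C \<Longrightarrow> C \<subseteq> Sig" for C
    unfolding is_cover_def Sig_def by auto
  show ?thesis
  proof (intro exI allI impI)
    fix R :: "'r \<Rightarrow> ('a,'v) tuple set"
    assume H: "is_instance Rels attr R \<and> IN Rels R \<ge> 2"
    then have inst: "is_instance Rels attr R" and IN1: "real (IN Rels R) > 1" by auto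
    define b where "b = real (IN Rels R)"
    define J where "J = join Rels attr R"
    define covs where "covs = {C. is_cover Rels attr C}"
    have "covs \<subseteq> Pow Sig" using covsub unfolding covs_def by auto
    then have fincovs: "finite covs" using finSig finite_subset by blast
    define C0 where "C0 = (\<lambda>r. (r, attr r)) ` Rels"
    have "is_cover Rels attr C0" unfolding is_cover_def C0_def all_attrs_def by auto
    then have "C0 \<in> covs" unfolding covs_def by simp
    have eqset: "{O_val Rels attr R C L | C. is_cover Rels attr C} = (\<lambda>C. O_val Rels attr R C L) ` covs"
      unfolding covs_def by auto
    have "DBP Rels attr R L \<in> (\<lambda>C. O_val Rels attr R C L) ` covs"
      unfolding DBP_def eqset using fincovs \<open>C0 \<in> covs\<close> by (intro Min_in) auto
    then obtain C where Ccov: "is_cover Rels attr C" and DC: "DBP Rels attr R L = O_val Rels attr R C L"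
      unfolding covs_def by auto
    define feas where "feas x \<longleftrightarrow> (\<forall>a\<in>all_attrs Rels attr. x a \<ge> 0) \<and>
      (\<forall>(r,A)\<in>C. \<forall>A'. A' \<subseteq> A \<longrightarrow>
          (\<Sum>a\<in>A'. x a) \<ge> log (real (IN Rels R)) (real (maxdeg (proj A (R r)) (A - A')) / L))" for x :: "'a \<Rightarrow> real"
    define S where "S = {(\<Sum>a\<in>all_attrs Rels attr. x a) | x :: 'a \<Rightarrow> real. feas x}"
    have OS: "O_val Rels attr R C L = Inf S" unfolding O_val_def S_def feas_def by simp
    have Csub: "\<forall>(r,A)\<in>C. r \<in> Rels \<and> A \<subseteq> attr r" using Ccov unfolding is_cover_def by auto
    have finC: "finite C" using covsub[OF Ccov] finSig finite_subset by blast
    have K1: "L ^ card C \<le> K" unfolding K_def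
      using assms(3) card_mono[OF finSig covsub[OF Ccov]] by (intro power_increasing) auto
    have bound: "real (card J) \<le> K * b powr s" if "s \<in> S" for s
    proof -
      obtain x where x: "feas x" and sx: "s = (\<Sum>a\<in>all_attrs Rels attr. x a)" using \<open>s \<in> S\<close> unfolding S_def by auto
      have sndeq: "(\<lambda>(r::'r, A::'a set). A) = snd" by (rule ext) auto
      have U: "\<Union>(snd ` C) = all_attrs Rels attr" using Ccov unfolding is_cover_def sndeq by simp
      have "(\<lambda>t. t |` all_attrs Rels attr) ` J = J"
      proof -
        have "t |` all_attrs Rels attr = t" if "t \<in> J" for t
          using that restrict_dom[of t] unfolding J_def join_def by auto
        then show ?thesis by (simp add: image_cong)
      qed
      moreover have "real (card ((\<lambda>t. t |` \<Union>(snd ` C)) ` join Rels attr R)) \<le> L ^ card C * real (IN Rels R) powr (\<Sum>a\<in>\<Union>(snd ` C). x a)"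
        using core[OF inst IN1 assms(3) assms(2) finC, of x] Csub x unfolding feas_def by blast
      ultimately have "real (card J) \<le> L ^ card C * b powr s" using U sx unfolding J_def b_def by simp
      also have "\<dots> \<le> K * b powr s" using K1 by (intro mult_right_mono) auto
      finally show ?thesis .
    qed
    have Sne: "S \<noteq> {}"
    proof -
      have "feas (\<lambda>_. 1)" unfolding feas_def
        using feasible_one[OF inst IN1 assms(3) assms(2) assms(1)] Csub by fastforce
      then show ?thesis unfolding S_def by blast
    qed
    have Sbdd: "bdd_below S"
    proof
      fix s assume "s \<in> S"
      then obtain x where "feas x" "s = (\<Sum>a\<in>all_attrs Rels attr. x a)" unfolding S_def by auto
      then show "0 \<le> s" unfolding feas_def by (simp add: sum_nonneg)
    qed
    have Kpos: "K > 0" unfolding K_def using assms(3) by simp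
    have "real (card J) \<le> K * b powr Inf S"
    proof (rule ccontr)
      assume "\<not> ?thesis"
      then have lt: "K * b powr Inf S < real (card J)" by simp
      have "0 \<le> K * b powr Inf S" using Kpos by simp
      then have "real (card J) > 0" using lt by linarith
      then have cJ: "real (card J) / K > 0" using Kpos by simp
      have "b powr Inf S < real (card J) / K" using lt Kpos by (simp add: field_simps)
      then have "Inf S < log b (real (card J) / K)" using less_log_iff[of b _ "Inf S"] IN1 cJ unfolding b_def by simp
      then obtain s where s: "s \<in> S" "s < log b (real (card J) / K)" using cInf_lessD[OF Sne] by blast
      then have "b powr s < real (card J) / K" using less_log_iff[of b _ s] IN1 cJ unfolding b_def by simp
      then have "K * b powr s < real (card J)" using Kpos by (simp add: field_simps)
      with bound[OF s(1)] show False by simp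
    qed
    then show "real (card (join Rels attr R)) \<le> K * real (IN Rels R) powr DBP Rels attr R L"
      unfolding DC OS J_def b_def .
  qed
qed
end
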